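(* The functional $\delta$ defines a finite metric on $\mathrm{Conv}_{\mathrm{coe}}(\mathbb{R}^n)$. Furthermore, $\delta(u,v)=\delta(u(\cdot-x_0)+t_0,\,v(\cdot-x_0)+t_0)$ for every $u,v\in\mathrm{Conv}_{\mathrm{coe}}(\mathbb{R}^n)$, $x_0\in\mathbb{R}^n$ and $t_0\in\mathbb{R}$.
   Context: $\mathrm{Conv}_{\mathrm{coe}}(\mathbb{R}^n)$ is the set of proper, lower semicontinuous, convex, coercive functions $u:\mathbb{R}^n\to\mathbb{R}\cup\{+\infty\}$. $u^*(y)=\sup_x(\langle x,y\rangle-u(x))$ is the convex conjugate. For $\lambda>0$, $\|u^*-v^*\|_{\infty,\frac1\lambda B^n}=\sup_{|x|\le1/\lambda}|u^*(x)-v^*(x)|$. Define $\delta(u,v)=\inf\{\lambda>0:\|u^*-v^*\|_{\infty,\frac1\lambda B^n}\le\lambda\}$; equivalently $\delta(u,v)=\inf\{\lambda>0: u\ge v\,\Box\,(n_\lambda-\lambda)\text{ and }v\ge u\,\Box\,(n_\lambda-\lambda)\}$ where $n_\lambda(x)=|x|/\lambda$ and $\Box$ is infimal convolution. *)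

theory Defs
  imports "HOL-Analysis.Analysis"
begin

definition proper_fn :: "('a \<Rightarrow> ereal) \<Rightarrow> bool" where
  "proper_fn u \<longleftrightarrow> (\<forall>x. u x \<noteq> -\<infinity>) \<and> (\<exists>x. u x \<noteq> \<infinity>)"

definition lsc_fn :: "('a::topological_space \<Rightarrow> ereal) \<Rightarrow> bool" where
  "lsc_fn u \<longleftrightarrow> (\<forall>t::real. closed {x. u x \<le> ereal t})"

definition convex_fn :: "('a::real_vector \<Rightarrow> ereal) \<Rightarrow> bool" where
  "convex_fn u \<longleftrightarrow> convex {(x, t::real). u x \<le> ereal t}"

definition coercive_fn :: "('a::real_normed_vector \<Rightarrow> ereal) \<Rightarrow> bool" where
  "coercive_fn u \<longleftrightarrow> (u \<longlongrightarrow> \<infinity>) at_infinity"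

definition Conv_coe :: "('a::euclidean_space \<Rightarrow> ereal) set" where
  "Conv_coe = {u. proper_fn u \<and> lsc_fn u \<and> convex_fn u \<and> coercive_fn u}"

definition conj_fn :: "('a::euclidean_space \<Rightarrow> ereal) \<Rightarrow> 'a \<Rightarrow> ereal" where
  "conj_fn u y = (SUP x. ereal (x \<bullet> y) - u x)"

text \<open>The condition ||u* - v*||_{infinity, (1/lambda) B^n} <= lambda, read in the
  extended reals as |u* - v*| <= lambda pointwise on the ball.\<close>
definition delta_ok :: "('a::euclidean_space \<Rightarrow> ereal) \<Rightarrow> ('a \<Rightarrow> ereal) \<Rightarrow> real \<Rightarrow> bool" where
  "delta_ok u v l \<longleftrightarrow> (\<forall>x. norm x \<le> 1 / l \<longrightarrow>
      conj_fn u x \<le> conj_fn v x + ereal l \<and> conj_fn v x \<le> conj_fn u x + ereal l)"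

definition delta :: "('a::euclidean_space \<Rightarrow> ereal) \<Rightarrow> ('a \<Rightarrow> ereal) \<Rightarrow> real" where
  "delta u v = Inf {l. l > 0 \<and> delta_ok u v l}"

end

theory Submission
  imports Defs
begin

definition epi :: "('a::euclidean_space \<Rightarrow> ereal) \<Rightarrow> ('a \<times> real) set" where
  "epi u = {(x, t). u x \<le> ereal t}"

lemma closed_epi:
  fixes u :: "'a::euclidean_space \<Rightarrow> ereal"
  assumes "lsc_fn u" shows "closed (epi u)"
  unfolding closed_sequential_limits
proof (intro allI impI)
  fix f and l :: "'a \<times> real"
  assume h: "(\<forall>n. f n \<in> epi u) \<and> f \<longlonglongrightarrow> l"
  obtain x t where l: "l = (x, t)" by fastforce
  have fx: "(\<lambda>n. fst (f n)) \<longlonglongrightarrow> x" and ft: "(\<lambda>n. snd (f n)) \<longlonglongrightarrow> t"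
    using h l tendsto_fst tendsto_snd by fastforce+
  have "u x \<le> ereal t + ereal e" if e: "e > 0" for e
  proof -
    have ev: "eventually (\<lambda>n. snd (f n) < t + e) sequentially"
      using ft e by (simp add: order_tendstoD(2))
    have "eventually (\<lambda>n. fst (f n) \<in> {z. u z \<le> ereal (t + e)}) sequentially"
    proof (rule eventually_mono[OF ev])
      fix n assume "snd (f n) < t + e"
      moreover have "u (fst (f n)) \<le> ereal (snd (f n))" using h unfolding epi_def
        by (metis (mono_tags, lifting) case_prod_beta mem_Collect_eq)
      ultimately show "fst (f n) \<in> {z. u z \<le> ereal (t + e)}"
        by (metis less_imp_le mem_Collect_eq order_trans ereal_less_eq(3))
    qed
    moreover have "closed {z. u z \<le> ereal (t + e)}" using assms unfolding lsc_fn_def by blast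
    ultimately have "x \<in> {z. u z \<le> ereal (t + e)}"
      using Lim_in_closed_set[OF _ _ _ fx] by (metis trivial_limit_sequentially)
    then show ?thesis by simp
  qed
  then have "u x \<le> ereal t" by (rule ereal_le_epsilon2)
  then show "l \<in> epi u" using l unfolding epi_def by simp
qed

lemma sep:
  fixes u :: "'a::euclidean_space \<Rightarrow> ereal"
  assumes "lsc_fn u" "convex_fn u" "\<not> u x \<le> ereal t"
  shows "\<exists>a al b. a \<bullet> x + al * t < b \<and> (\<forall>z s. u z \<le> ereal s \<longrightarrow> b < a \<bullet> z + al * s)"
proof -
  have "convex (epi u)" using assms(2) unfolding convex_fn_def epi_def by simp
  moreover have "(x, t) \<notin> epi u" using assms(3) unfolding epi_def by simp
  ultimately obtain p b where "inner p (x, t) < b" "\<forall>q\<in>epi u. inner p q > b"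
    using separating_hyperplane_closed_point closed_epi[OF assms(1)] by blast
  then show ?thesis
    by (intro exI[of _ "fst p"] exI[of _ "snd p"] exI[of _ b])
       (cases p, auto simp: epi_def)
qed

lemma sep_pos:
  fixes u :: "'a::euclidean_space \<Rightarrow> ereal"
  assumes "proper_fn u" "lsc_fn u" "convex_fn u" "\<not> u x \<le> ereal t"
  shows "\<exists>a al b. al \<ge> 0 \<and> a \<bullet> x + al * t < b \<and> (\<forall>z s. u z \<le> ereal s \<longrightarrow> b < a \<bullet> z + al * s)"
proof -
  obtain a al b where h: "a \<bullet> x + al * t < b" "\<forall>z s. u z \<le> ereal s \<longrightarrow> b < a \<bullet> z + al * s"
    using sep[OF assms(2-4)] by blast
  obtain x1 where "u x1 \<noteq> \<infinity>" using assms(1) unfolding proper_fn_def by blast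
  moreover have "u x1 \<noteq> -\<infinity>" using assms(1) unfolding proper_fn_def by blast
  ultimately obtain s1 where s1: "u x1 = ereal s1" by (cases "u x1") auto
  have "al \<ge> 0"
  proof (rule ccontr)
    assume neg: "\<not> al \<ge> 0"
    define s where "s = max s1 ((b - a \<bullet> x1) / al)"
    have "u x1 \<le> ereal s" using s1 s_def by simp
    then have "b < a \<bullet> x1 + al * s" using h by blast
    moreover have "al * s \<le> al * ((b - a \<bullet> x1) / al)"
      using neg s_def by (intro mult_left_mono_neg) auto
    moreover have "al * ((b - a \<bullet> x1) / al) = b - a \<bullet> x1" using neg by simp
    ultimately show False by linarith
  qed
  then show ?thesis using h by blast
qed


lemma proper_real:
  assumes "proper_fn u" "u x \<noteq> \<infinity>" shows "u x = ereal (real_of_ereal (u x))"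
  using assms unfolding proper_fn_def by (cases "u x") auto

lemma am_exists:
  fixes u :: "'a::euclidean_space \<Rightarrow> ereal"
  assumes "proper_fn u" "lsc_fn u" "convex_fn u"
  shows "\<exists>a c. \<forall>z. ereal (a \<bullet> z + c) \<le> u z"
proof -
  obtain x0 where x0: "u x0 \<noteq> \<infinity>" using assms(1) unfolding proper_fn_def by blast
  define c0 where "c0 = real_of_ereal (u x0)"
  have uc0: "u x0 = ereal c0" using proper_real[OF assms(1) x0] c0_def by simp
  have "\<not> u x0 \<le> ereal (c0 - 1)" using uc0 by simp
  then obtain a al b where h: "a \<bullet> x0 + al * (c0 - 1) < b"
    "\<forall>z s. u z \<le> ereal s \<longrightarrow> b < a \<bullet> z + al * s"
    using sep[OF assms(2,3)] by blast
  have "b < a \<bullet> x0 + al * c0" using h(2) uc0 by simp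
  then have alpos: "al > 0" using h(1) by (simp add: algebra_simps)
  have "ereal ((- a /\<^sub>R al) \<bullet> z + b / al) \<le> u z" for z
  proof (cases "u z = \<infinity>")
    case True then show ?thesis by simp
  next
    case False
    define s where "s = real_of_ereal (u z)"
    have us: "u z = ereal s" using proper_real[OF assms(1) False] s_def by simp
    then have "b < a \<bullet> z + al * s" using h(2) by simp
    then have "(- a /\<^sub>R al) \<bullet> z + b / al \<le> s" using alpos
      by (simp add: field_simps inner_commute)
    then show ?thesis using us by simp
  qed
  then show ?thesis by blast
qed

lemma fm:
  fixes u :: "'a::euclidean_space \<Rightarrow> ereal"
  assumes "proper_fn u" "lsc_fn u" "convex_fn u" "\<not> u x \<le> ereal t"
  shows "\<exists>a c. (\<forall>z. ereal (a \<bullet> z + c) \<le> u z) \<and> t < a \<bullet> x + c"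
proof -
  obtain a al b where h: "al \<ge> 0" "a \<bullet> x + al * t < b"
    "\<forall>z s. u z \<le> ereal s \<longrightarrow> b < a \<bullet> z + al * s"
    using sep_pos[OF assms] by blast
  show ?thesis
  proof (cases "al > 0")
    case alpos: True
    have "ereal ((- a /\<^sub>R al) \<bullet> z + b / al) \<le> u z" for z
    proof (cases "u z = \<infinity>")
      case True then show ?thesis by simp
    next
      case False
      define s where "s = real_of_ereal (u z)"
      have us: "u z = ereal s" using proper_real[OF assms(1) False] s_def by simp
      then have "b < a \<bullet> z + al * s" using h(3) by simp
      then have "(- a /\<^sub>R al) \<bullet> z + b / al \<le> s" using alpos
        by (simp add: field_simps inner_commute)
      then show ?thesis using us by simp
    qed
    moreover have "t < (- a /\<^sub>R al) \<bullet> x + b / al" using h(2) alpos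
      by (simp add: field_simps inner_commute)
    ultimately show ?thesis by blast
  next
    case False
    then have al0: "al = 0" using h(1) by simp
    obtain a0 c0 where m: "\<forall>z. ereal (a0 \<bullet> z + c0) \<le> u z" using am_exists[OF assms(1-3)] by blast
    have bx: "a \<bullet> x < b" using h(2) al0 by simp
    define lam where "lam = max 0 ((t - a0 \<bullet> x - c0) / (b - a \<bullet> x)) + 1"
    have lampos: "lam > 0" unfolding lam_def by simp
    have "ereal ((a0 - lam *\<^sub>R a) \<bullet> z + (c0 + lam * b)) \<le> u z" for z
    proof (cases "u z = \<infinity>")
      case True then show ?thesis by simp
    next
      case False
      define s where "s = real_of_ereal (u z)"
      have us: "u z = ereal s" using proper_real[OF assms(1) False] s_def by simp
      then have "b < a \<bullet> z + al * s" using h(3) by simp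
      then have "b < a \<bullet> z" using al0 by simp
      then have "lam * (b - a \<bullet> z) \<le> 0" using lampos
        by (simp add: mult_nonneg_nonpos)
      then have "(a0 - lam *\<^sub>R a) \<bullet> z + (c0 + lam * b) \<le> a0 \<bullet> z + c0"
        by (simp add: algebra_simps inner_diff_left)
      also have "ereal (a0 \<bullet> z + c0) \<le> u z" using m by blast
      finally show ?thesis by simp
    qed
    moreover have "t < (a0 - lam *\<^sub>R a) \<bullet> x + (c0 + lam * b)"
    proof -
      have d: "b - a \<bullet> x > 0" using bx by simp
      have "(t - a0 \<bullet> x - c0) / (b - a \<bullet> x) < lam" unfolding lam_def by simp
      then have "t - a0 \<bullet> x - c0 < lam * (b - a \<bullet> x)" using d by (simp add: divide_less_eq)
      then show ?thesis by (simp add: algebra_simps inner_diff_left)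
    qed
    ultimately show ?thesis by blast
  qed
qed

lemma conj_eq_imp_le:
  fixes u v :: "'a::euclidean_space \<Rightarrow> ereal"
  assumes "proper_fn u" "lsc_fn u" "convex_fn u" "proper_fn v" "conj_fn u = conj_fn v"
  shows "u x \<le> v x"
proof (rule ccontr)
  assume nle: "\<not> u x \<le> v x"
  then have "v x \<noteq> \<infinity>" by auto
  define t0 where "t0 = real_of_ereal (v x)"
  have vt: "v x = ereal t0" using proper_real[OF assms(4) \<open>v x \<noteq> \<infinity>\<close>] t0_def by simp
  obtain a c where m: "\<forall>z. ereal (a \<bullet> z + c) \<le> u z" and tl: "t0 < a \<bullet> x + c"
    using fm[OF assms(1-3), of x t0] nle vt by auto
  have "ereal (z \<bullet> a) - u z \<le> ereal (- c)" for z
  proof (cases "u z")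
    case (real r)
    then have "a \<bullet> z + c \<le> r" using m by (metis ereal_less_eq(3))
    then show ?thesis using real by (simp add: inner_commute)
  next
    case MInf
    have "ereal (a \<bullet> z + c) \<le> u z" using m by blast
    then show ?thesis using MInf by simp
  qed simp
  then have "conj_fn u a \<le> ereal (- c)" unfolding conj_fn_def by (simp add: SUP_least)
  moreover have "ereal (x \<bullet> a) - v x \<le> conj_fn v a" unfolding conj_fn_def
    by (rule SUP_upper) simp
  ultimately have "ereal (x \<bullet> a) - ereal t0 \<le> ereal (- c)" using assms(5) vt
    by (metis order_trans)
  then show False using tl by (simp add: inner_commute)
qed


lemma convex_fn_ineq:
  fixes u :: "'a::euclidean_space \<Rightarrow> ereal"
  assumes "convex_fn u" "u x \<le> ereal s" "u y \<le> ereal r" "0 \<le> th" "th \<le> 1"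
  shows "u ((1 - th) *\<^sub>R x + th *\<^sub>R y) \<le> ereal ((1 - th) * s + th * r)"
proof -
  have "(1 - th) *\<^sub>R (x, s) + th *\<^sub>R (y, r) \<in> {(x, t::real). u x \<le> ereal t}"
    using assms unfolding convex_fn_def by (intro convexD) auto
  then show ?thesis by simp
qed

lemma growth:
  fixes u :: "'a::euclidean_space \<Rightarrow> ereal"
  assumes "u \<in> Conv_coe"
  shows "\<exists>r>0. \<exists>K. \<forall>z. ereal (r * norm z - K) \<le> u z"
proof -
  have pr: "proper_fn u" and ls: "lsc_fn u" and cv: "convex_fn u" and co: "coercive_fn u"
    using assms unfolding Conv_coe_def by auto
  obtain x0 where x0: "u x0 \<noteq> \<infinity>" using pr unfolding proper_fn_def by blast
  define c0 where "c0 = real_of_ereal (u x0)"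
  have uc0: "u x0 = ereal c0" using proper_real[OF pr x0] c0_def by simp
  obtain a0 d0 where m: "\<forall>z. ereal (a0 \<bullet> z + d0) \<le> u z" using am_exists[OF pr ls cv] by blast
  have "eventually (\<lambda>z. ereal (c0 + 1) < u z) at_infinity"
    using co unfolding coercive_fn_def tendsto_PInfty by blast
  then obtain R where R: "\<And>z. R \<le> norm z \<Longrightarrow> ereal (c0 + 1) < u z"
    unfolding eventually_at_infinity by blast
  define R' where "R' = \<bar>R\<bar> + norm x0 + 1"
  have R'pos: "R' > 0" unfolding R'_def by (smt (verit) norm_ge_zero)
  define K where "K = max (norm x0 / R' - c0) ((R' + norm x0) / R' + norm a0 * (R' + norm x0) - d0)"
  have "ereal (norm z / R' - K) \<le> u z" for z
  proof (cases "u z = \<infinity>")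
    case True then show ?thesis by simp
  next
    case False
    define s where "s = real_of_ereal (u z)"
    have us: "u z = ereal s" using proper_real[OF pr False] s_def by simp
    show ?thesis
    proof (cases "norm (z - x0) \<ge> R'")
      case True
      define th where "th = R' / norm (z - x0)"
      have nz: "norm (z - x0) > 0" using True R'pos by linarith
      have th0: "0 < th" and th1: "th \<le> 1" unfolding th_def using nz True R'pos by auto
      define w where "w = (1 - th) *\<^sub>R x0 + th *\<^sub>R z"
      have "w - x0 = th *\<^sub>R (z - x0)" unfolding w_def by (simp add: algebra_simps)
      then have "norm (w - x0) = R'" unfolding th_def using nz R'pos by simp
      then have "norm w \<ge> R' - norm x0" by (metis norm_triangle_ineq2 order_trans linorder_not_le
          add_diff_cancel_left' diff_add_cancel norm_minus_commute diff_le_eq order_refl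
          norm_diff_ineq)
      then have "R \<le> norm w" unfolding R'_def by linarith
      then have "ereal (c0 + 1) < u w" by (rule R)
      also have "u w \<le> ereal ((1 - th) * c0 + th * s)" unfolding w_def
        using convex_fn_ineq[OF cv, of x0 c0 z s th] uc0 us th0 th1 by simp
      finally have "c0 + 1 < (1 - th) * c0 + th * s" by simp
      then have "1 < th * (s - c0)" by (simp add: algebra_simps)
      then have "1 / th < s - c0" using th0 by (simp add: field_simps)
      moreover have "1 / th = norm (z - x0) / R'" unfolding th_def by simp
      moreover have "norm z - norm x0 \<le> norm (z - x0)" by (rule norm_triangle_ineq2)
      ultimately have "(norm z - norm x0) / R' < s - c0" using R'pos
        by (smt (verit, best) divide_right_mono)
      then have "norm z / R' - (norm x0 / R' - c0) \<le> s" by (simp add: diff_divide_distrib)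
      then have "norm z / R' - K \<le> s" unfolding K_def by linarith
      then show ?thesis using us by simp
    next
      case False
      have nz: "norm z \<le> R' + norm x0" using False norm_triangle_ineq4[of z x0]
        by (smt (verit) norm_triangle_ineq2)
      have "\<bar>a0 \<bullet> z\<bar> \<le> norm a0 * norm z" by (rule Cauchy_Schwarz_ineq2)
      also have "\<dots> \<le> norm a0 * (R' + norm x0)" using nz by (simp add: mult_left_mono)
      finally have "a0 \<bullet> z + d0 \<ge> - (norm a0 * (R' + norm x0)) + d0" by linarith
      moreover have "norm z / R' \<le> (R' + norm x0) / R'" using nz R'pos by (simp add: divide_right_mono)
      moreover have "ereal (a0 \<bullet> z + d0) \<le> ereal s" using m us by metis
      ultimately have "norm z / R' - K \<le> s" unfolding K_def by simp
      then show ?thesis using us by simp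
    qed
  qed
  then show ?thesis using R'pos by (intro exI[of _ "1 / R'"]) auto
qed


lemma conj_bounds:
  fixes u :: "'a::euclidean_space \<Rightarrow> ereal"
  assumes "u \<in> Conv_coe"
  shows "\<exists>r>0. \<exists>K L. \<forall>y. norm y \<le> r \<longrightarrow> ereal L \<le> conj_fn u y \<and> conj_fn u y \<le> ereal K"
proof -
  have pr: "proper_fn u" using assms unfolding Conv_coe_def by auto
  obtain r K where r: "r > 0" and g: "\<forall>z. ereal (r * norm z - K) \<le> u z"
    using growth[OF assms] by blast
  obtain x0 where x0: "u x0 \<noteq> \<infinity>" using pr unfolding proper_fn_def by blast
  define c0 where "c0 = real_of_ereal (u x0)"
  have uc0: "u x0 = ereal c0" using proper_real[OF pr x0] c0_def by simp
  have "ereal (- norm x0 * r - c0) \<le> conj_fn u y \<and> conj_fn u y \<le> ereal K" if y: "norm y \<le> r" for y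
  proof
    have "ereal (- norm x0 * r - c0) \<le> ereal (x0 \<bullet> y) - u x0"
    proof -
      have "\<bar>x0 \<bullet> y\<bar> \<le> norm x0 * norm y" by (rule Cauchy_Schwarz_ineq2)
      also have "\<dots> \<le> norm x0 * r" using y by (simp add: mult_left_mono)
      finally show ?thesis using uc0 by simp
    qed
    also have "\<dots> \<le> conj_fn u y" unfolding conj_fn_def by (rule SUP_upper) simp
    finally show "ereal (- norm x0 * r - c0) \<le> conj_fn u y" .
  next
    have "ereal (z \<bullet> y) - u z \<le> ereal K" for z
    proof (cases "u z")
      case (real s)
      have "\<bar>z \<bullet> y\<bar> \<le> norm z * norm y" by (rule Cauchy_Schwarz_ineq2)
      also have "\<dots> \<le> norm z * r" using y by (simp add: mult_left_mono)
      finally have "z \<bullet> y \<le> r * norm z" by (simp add: mult.commute)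
      moreover have "r * norm z - K \<le> s" using g real by (metis ereal_less_eq(3))
      ultimately show ?thesis using real by simp
    next
      case MInf
      have "ereal (r * norm z - K) \<le> u z" using g by blast
      then show ?thesis using MInf by simp
    qed simp
    then show "conj_fn u y \<le> ereal K" unfolding conj_fn_def by (simp add: SUP_least)
  qed
  then show ?thesis using r by blast
qed

lemma ok_nonempty:
  fixes u v :: "'a::euclidean_space \<Rightarrow> ereal"
  assumes "u \<in> Conv_coe" "v \<in> Conv_coe"
  shows "\<exists>l>0. delta_ok u v l"
proof -
  obtain r1 K1 L1 where r1: "r1 > 0" "\<forall>y. norm y \<le> r1 \<longrightarrow> ereal L1 \<le> conj_fn u y \<and> conj_fn u y \<le> ereal K1"
    using conj_bounds[OF assms(1)] by blast
  obtain r2 K2 L2 where r2: "r2 > 0" "\<forall>y. norm y \<le> r2 \<longrightarrow> ereal L2 \<le> conj_fn v y \<and> conj_fn v y \<le> ereal K2"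
    using conj_bounds[OF assms(2)] by blast
  define l where "l = 1 / r1 + 1 / r2 + \<bar>K1\<bar> + \<bar>K2\<bar> + \<bar>L1\<bar> + \<bar>L2\<bar>"
  have lpos: "l > 0" unfolding l_def using r1 r2 by (smt (verit) divide_pos_pos)
  have "delta_ok u v l" unfolding delta_ok_def
  proof (intro allI impI)
    fix y :: 'a assume y: "norm y \<le> 1 / l"
    have "1 / l \<le> r1"
    proof -
      have "1 / r1 \<le> l" unfolding l_def using r1 r2 by (smt (verit) divide_pos_pos)
      then show ?thesis using r1 lpos by (simp add: divide_le_eq mult.commute)
    qed
    moreover have "1 / l \<le> r2"
    proof -
      have "1 / r2 \<le> l" unfolding l_def using r1 r2 by (smt (verit) divide_pos_pos)
      then show ?thesis using r2 lpos by (simp add: divide_le_eq mult.commute)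
    qed
    ultimately have b1: "ereal L1 \<le> conj_fn u y \<and> conj_fn u y \<le> ereal K1"
      and b2: "ereal L2 \<le> conj_fn v y \<and> conj_fn v y \<le> ereal K2" using y r1 r2 by auto
    have k1: "K1 \<le> L2 + l" and k2: "K2 \<le> L1 + l" unfolding l_def using r1 r2
      by (smt (verit) divide_pos_pos)+
    have "conj_fn u y \<le> ereal (L2 + l)" using b1 k1 by (meson ereal_less_eq(3) order_trans)
    also have "\<dots> = ereal L2 + ereal l" by simp
    also have "\<dots> \<le> conj_fn v y + ereal l" using b2 by (intro add_right_mono) blast
    finally show "conj_fn u y \<le> conj_fn v y + ereal l \<and> conj_fn v y \<le> conj_fn u y + ereal l"
    proof -
      assume c1: "conj_fn u y \<le> conj_fn v y + ereal l"
      have "conj_fn v y \<le> ereal (L1 + l)" using b2 k2 by (meson ereal_less_eq(3) order_trans)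
      also have "\<dots> = ereal L1 + ereal l" by simp
      also have "\<dots> \<le> conj_fn u y + ereal l" using b1 by (intro add_right_mono) blast
      finally show ?thesis using c1 by simp
    qed
  qed
  then show ?thesis using lpos by blast
qed

lemma ok_mono:
  assumes "delta_ok u v l" "0 < l" "l \<le> l'" shows "delta_ok u v l'"
  unfolding delta_ok_def
proof (intro allI impI)
  fix x :: 'a assume "norm x \<le> 1 / l'"
  moreover have "1 / l' \<le> 1 / l" using assms by (simp add: frac_le)
  ultimately have "norm x \<le> 1 / l" by linarith
  then have h: "conj_fn u x \<le> conj_fn v x + ereal l \<and> conj_fn v x \<le> conj_fn u x + ereal l"
    using assms(1) unfolding delta_ok_def by blast
  have "ereal l \<le> ereal l'" using assms by simp
  then have "conj_fn v x + ereal l \<le> conj_fn v x + ereal l'" "conj_fn u x + ereal l \<le> conj_fn u x + ereal l'"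
    by (simp_all add: add_left_mono)
  then show "conj_fn u x \<le> conj_fn v x + ereal l' \<and> conj_fn v x \<le> conj_fn u x + ereal l'"
    using h by (meson order_trans)
qed

lemma ok_sym: "delta_ok u v l \<longleftrightarrow> delta_ok v u l"
  unfolding delta_ok_def by blast

lemma ok_trans:
  assumes "delta_ok u v l1" "delta_ok v w l2" "0 < l1" "0 < l2"
  shows "delta_ok u w (l1 + l2)"
  unfolding delta_ok_def
proof (intro allI impI)
  fix x :: 'a assume x: "norm x \<le> 1 / (l1 + l2)"
  have "1 / (l1 + l2) \<le> 1 / l1" "1 / (l1 + l2) \<le> 1 / l2" using assms by (simp_all add: frac_le)
  then have h1: "conj_fn u x \<le> conj_fn v x + ereal l1 \<and> conj_fn v x \<le> conj_fn u x + ereal l1"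
    and h2: "conj_fn v x \<le> conj_fn w x + ereal l2 \<and> conj_fn w x \<le> conj_fn v x + ereal l2"
    using assms(1,2) x unfolding delta_ok_def by (meson order_trans)+
  have "conj_fn u x \<le> conj_fn w x + ereal l2 + ereal l1"
    using h1 h2 by (meson add_right_mono order_trans)
  moreover have "conj_fn w x \<le> conj_fn u x + ereal l1 + ereal l2"
    using h1 h2 by (meson add_right_mono order_trans)
  moreover have "conj_fn w x + ereal l2 + ereal l1 = conj_fn w x + ereal (l1 + l2)"
    "conj_fn u x + ereal l1 + ereal l2 = conj_fn u x + ereal (l1 + l2)"
    by (metis add.assoc add.commute plus_ereal.simps(1))+
  ultimately show "conj_fn u x \<le> conj_fn w x + ereal (l1 + l2) \<and> conj_fn w x \<le> conj_fn u x + ereal (l1 + l2)"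
    by simp
qed

lemma conj_shift:
  fixes u :: "'a::euclidean_space \<Rightarrow> ereal"
  shows "conj_fn (\<lambda>x. u (x - x0) + ereal t0) y = conj_fn u y + ereal (x0 \<bullet> y - t0)"
proof -
  define F where "F x = ereal (x \<bullet> y) - (u (x - x0) + ereal t0)" for x
  have sur: "range (\<lambda>z. z + x0) = UNIV" by (metis surj_def diff_add_cancel)
  have "conj_fn (\<lambda>x. u (x - x0) + ereal t0) y = (SUP x. F x)" unfolding conj_fn_def F_def by simp
  also have "\<dots> = (SUP x\<in>range (\<lambda>z. z + x0). F x)" by (simp only: sur)
  also have "\<dots> = (SUP z. F (z + x0))" by (simp only: image_image)
  also have "\<dots> = (SUP z. (ereal (z \<bullet> y) - u z) + ereal (x0 \<bullet> y - t0))"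
  proof (rule SUP_cong)
    fix z :: 'a
    show "F (z + x0) = (ereal (z \<bullet> y) - u z) + ereal (x0 \<bullet> y - t0)"
      unfolding F_def by (cases "u z") (auto simp: inner_add_left)
  qed simp
  also have "\<dots> = (SUP z. ereal (z \<bullet> y) - u z) + ereal (x0 \<bullet> y - t0)"
    by (rule SUP_ereal_add_left) auto
  finally show ?thesis unfolding conj_fn_def .
qed

lemma ok_shift:
  fixes u v :: "'a::euclidean_space \<Rightarrow> ereal"
  shows "delta_ok (\<lambda>x. u (x - x0) + ereal t0) (\<lambda>x. v (x - x0) + ereal t0) l \<longleftrightarrow> delta_ok u v l"
proof -
  have "a + ereal c \<le> b + ereal c + ereal l \<longleftrightarrow> a \<le> b + ereal l" for a b :: ereal and c
  proof -
    have "b + ereal c + ereal l = (b + ereal l) + ereal c" by (metis add.assoc add.commute)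
    then show ?thesis by (simp add: ereal_add_le_add_iff2)
  qed
  then show ?thesis unfolding delta_ok_def conj_shift by simp
qed


lemma delta_zero_conj:
  fixes u v :: "'a::euclidean_space \<Rightarrow> ereal"
  assumes "\<And>l. l > 0 \<Longrightarrow> delta_ok u v l"
  shows "conj_fn u y \<le> conj_fn v y"
proof (rule ereal_le_epsilon2)
  fix e :: real assume e: "0 < e"
  define l where "l = min e (1 / (norm y + 1))"
  have "norm y + 1 > 0" by (smt (verit) norm_ge_zero)
  then have lpos: "l > 0" unfolding l_def using e by simp
  have "l \<le> 1 / (norm y + 1)" unfolding l_def by simp
  then have "norm y + 1 \<le> 1 / l" using lpos
    by (smt (verit) divide_le_eq le_divide_eq mult.commute norm_ge_zero)
  then have "norm y \<le> 1 / l" by simp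
  then have "conj_fn u y \<le> conj_fn v y + ereal l" using assms[OF lpos] unfolding delta_ok_def by blast
  also have "\<dots> \<le> conj_fn v y + ereal e" unfolding l_def by (intro add_left_mono) simp
  finally show "conj_fn u y \<le> conj_fn v y + ereal e" .
qed

theorem lemma5p11:
  fixes u v w :: "'a::euclidean_space \<Rightarrow> ereal"
  assumes "u \<in> Conv_coe" and "v \<in> Conv_coe" and "w \<in> Conv_coe"
  shows "{l. l > 0 \<and> delta_ok u v l} \<noteq> {}
    \<and> delta u v \<ge> 0
    \<and> (delta u v = 0 \<longleftrightarrow> u = v)
    \<and> delta u v = delta v u
    \<and> delta u w \<le> delta u v + delta v w
    \<and> (\<forall>(x0::'a) (t0::real). delta u v =
           delta (\<lambda>x. u (x - x0) + ereal t0) (\<lambda>x. v (x - x0) + ereal t0))"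
proof -
  have ne: "\<And>a b. a \<in> Conv_coe \<Longrightarrow> b \<in> Conv_coe \<Longrightarrow> {l. l > 0 \<and> delta_ok a b l} \<noteq> {}"
    using ok_nonempty by blast
  have bdd: "bdd_below {l. l > 0 \<and> delta_ok a b l}" for a b :: "'a \<Rightarrow> ereal"
    by (rule bdd_belowI[of _ 0]) simp
  have nn: "\<And>a b. a \<in> Conv_coe \<Longrightarrow> b \<in> Conv_coe \<Longrightarrow> delta a b \<ge> 0"
    unfolding delta_def by (rule cInf_greatest) (use ne in auto)
  have low: "delta a b \<le> l" if "l > 0" "delta_ok a b l" for a b :: "'a \<Rightarrow> ereal" and l
    unfolding delta_def by (rule cInf_lower) (use that bdd in auto)
  have P1: "{l. l > 0 \<and> delta_ok u v l} \<noteq> {}" using ne assms by blast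
  have P2: "delta u v \<ge> 0" using nn assms by blast
  have P4: "delta u v = delta v u" unfolding delta_def by (simp only: ok_sym)
  have P6: "\<forall>(x0::'a) (t0::real). delta u v =
           delta (\<lambda>x. u (x - x0) + ereal t0) (\<lambda>x. v (x - x0) + ereal t0)"
    unfolding delta_def by (simp only: ok_shift) simp
  have P5: "delta u w \<le> delta u v + delta v w"
  proof -
    have A: "delta u w - l2 \<le> delta u v" if l2: "l2 > 0" "delta_ok v w l2" for l2
    proof -
      have "delta u w - l2 \<le> Inf {l. l > 0 \<and> delta_ok u v l}"
      proof (rule cInf_greatest)
        show "{l. l > 0 \<and> delta_ok u v l} \<noteq> {}" by (rule P1)
        fix l1 assume "l1 \<in> {l. l > 0 \<and> delta_ok u v l}"
        then have "delta_ok u w (l1 + l2)" using ok_trans l2 by blast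
        moreover have "l1 + l2 > 0" using l2 \<open>l1 \<in> _\<close> by simp
        ultimately have "delta u w \<le> l1 + l2" using low by blast
        then show "delta u w - l2 \<le> l1" by simp
      qed
      then show ?thesis unfolding delta_def .
    qed
    have "delta u w - delta u v \<le> Inf {l. l > 0 \<and> delta_ok v w l}"
    proof (rule cInf_greatest)
      show "{l. l > 0 \<and> delta_ok v w l} \<noteq> {}" using ne assms by blast
      fix l2 assume "l2 \<in> {l. l > 0 \<and> delta_ok v w l}"
      then show "delta u w - delta u v \<le> l2" using A by force
    qed
    then show ?thesis unfolding delta_def by simp
  qed
  have P3: "delta u v = 0 \<longleftrightarrow> u = v"
  proof
    assume d0: "delta u v = 0"
    have all: "delta_ok u v l" if lp: "l > 0" for l
    proof -
      have "Inf {l. l > 0 \<and> delta_ok u v l} < l" using d0 lp unfolding delta_def by simp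
      then obtain l' where "l' \<in> {l. l > 0 \<and> delta_ok u v l}" "l' < l"
        using cInf_less_iff[OF P1 bdd] by blast
      then show ?thesis using ok_mono by (metis (mono_tags, lifting) less_imp_le mem_Collect_eq)
    qed
    have all': "delta_ok v u l" if "l > 0" for l using all[OF that] ok_sym by blast
    have ce: "conj_fn u = conj_fn v"
      using delta_zero_conj[OF all] delta_zero_conj[OF all'] by (intro ext antisym) auto
    have fu: "proper_fn u" "lsc_fn u" "convex_fn u" "proper_fn v" "lsc_fn v" "convex_fn v"
      using assms unfolding Conv_coe_def by auto
    show "u = v"
    proof (intro ext antisym)
      fix x show "u x \<le> v x" using conj_eq_imp_le[of u v x] ce fu by blast
      show "v x \<le> u x" using conj_eq_imp_le[of v u x] ce fu by metis
    qed
  next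
    assume "u = v"
    then have ok: "delta_ok u v l" if "l > 0" for l
      unfolding delta_ok_def using that by (simp add: ereal_le_add_self2 ereal_le_add_self)
    have "delta u v \<le> e" if "e > 0" for e using low[OF that ok[OF that]] .
    then have "delta u v \<le> 0" by (meson dense not_le)
    then show "delta u v = 0" using P2 by simp
  qed
  show ?thesis using P1 P2 P3 P4 P5 P6 by blast
qed

end
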